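(* Let $\boldsymbol{W}=(w_{ir})\in\mathbb{R}^{n\times n}$ be nonnegative, primitive and doubly stochastic, with $\lambda:=\|\boldsymbol{W}-\mathbf{1}_n\mathbf{1}_n^\top/n\|_2<1$. For any realization of the iterates of GT-NSGDm (described in the context) with step size $\alpha>0$, and $\bar{\boldsymbol{x}}^t=\frac1n\sum_i\boldsymbol{x}_i^t$, we have for all $t=0,\dots,T$: $$\frac1n\sum_{i=1}^n\|\boldsymbol{x}_i^t-\bar{\boldsymbol{x}}^t\|\le\frac{\alpha\lambda}{1-\lambda}.$$
   Context: Algorithm GT-NSGDm (run in parallel at every node $i$, with local functions $f_i$ and stochastic gradients $\boldsymbol{g}_i(\boldsymbol{x},\boldsymbol{\xi})$): initialize $\boldsymbol{x}_i^{-1}=\boldsymbol{x}_i^0=\bar{\boldsymbol{x}}^0$ (a common point) and $\boldsymbol{v}_i^{-1}=\boldsymbol{y}_i^{-1}=\mathbf{0}_d$. For $t=0,\dots,T-1$: sample $\boldsymbol{\xi}_i^t$; set $\boldsymbol{v}_i^t=\beta\boldsymbol{v}_i^{t-1}+(1-\beta)\boldsymbol{g}_i(\boldsymbol{x}_i^t,\boldsymbol{\xi}_i^t)$; $\boldsymbol{y}_i^t=\sum_{r=1}^n w_{ir}(\boldsymbol{y}_r^{t-1}+\boldsymbol{v}_r^t-\boldsymbol{v}_r^{t-1})$; $\boldsymbol{x}_i^{t+1}=\sum_{r=1}^n w_{ir}\big(\boldsymbol{x}_r^t-\alpha\,\boldsymbol{y}_r^t/\|\boldsymbol{y}_r^t\|\big)$.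 *)

theory Defs
  imports "HOL-Analysis.Analysis"
begin

(* Matrices over a finite index type 'n (the n nodes), n = CARD('n). *)

fun mat_pow :: "real^'n^'n \<Rightarrow> nat \<Rightarrow> real^'n^'n" where
  "mat_pow W 0 = mat 1"
| "mat_pow W (Suc k) = W ** mat_pow W k"

definition nonneg_matrix :: "real^'n^'n \<Rightarrow> bool" where
  "nonneg_matrix W \<longleftrightarrow> (\<forall>i j. 0 \<le> W $ i $ j)"

definition primitive_matrix :: "real^'n^'n \<Rightarrow> bool" where
  "primitive_matrix W \<longleftrightarrow> (\<exists>k. \<forall>i j. 0 < mat_pow W k $ i $ j)"

definition doubly_stochastic :: "real^'n^'n \<Rightarrow> bool" where
  "doubly_stochastic W \<longleftrightarrow>
     (\<forall>i j. 0 \<le> W $ i $ j) \<and> (\<forall>i. (\<Sum>j\<in>UNIV. W $ i $ j) = 1) \<and> (\<forall>j. (\<Sum>i\<in>UNIV. W $ i $ j) = 1)"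

definition avg_matrix :: "real^'n^'n" where
  "avg_matrix = (\<chi> i j. 1 / real CARD('n))"

(* spectral norm ||W - 1 1^T/n||_2 = operator norm w.r.t. the Euclidean norm *)
definition mixing_rate :: "real^'n^'n \<Rightarrow> real" where
  "mixing_rate W = onorm (\<lambda>z. (W - avg_matrix) *v z)"

(* normalized vector y/||y|| (convention: 0 when y = 0, since inverse 0 = 0) *)
definition normalize :: "real^'d \<Rightarrow> real^'d" where
  "normalize y = (1 / norm y) *\<^sub>R y"

end

theory Submission imports Defs begin

lemma norm_sq_vec: "(norm (w::real^'m))^2 = (\<Sum>k\<in>UNIV. (w$k)^2)"
  by (simp add: norm_vec_def L2_set_def sum_nonneg)

lemma mop_sq:
  fixes M :: "real^'n^'n" and u :: "'n \<Rightarrow> real^'d"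
  shows "(\<Sum>i\<in>UNIV. (norm (\<Sum>r\<in>UNIV. M$i$r *\<^sub>R u r))^2)
     \<le> (onorm (\<lambda>z. M *v z))^2 * (\<Sum>i\<in>UNIV. (norm (u i))^2)"
proof -
  define L where "L = onorm (\<lambda>z. M *v z)"
  have L0: "0 \<le> L" unfolding L_def by (rule onorm_pos_le) simp
  define c where "c k = (\<chi> r. u r $ k)" for k
  have comp: "(\<Sum>r\<in>UNIV. M$i$r *\<^sub>R u r) $ k = (M *v c k) $ i" for i k
    by (simp add: matrix_vector_mult_def c_def sum_component)
  have "(\<Sum>i\<in>UNIV. (norm (\<Sum>r\<in>UNIV. M$i$r *\<^sub>R u r))^2)
      = (\<Sum>i\<in>UNIV. \<Sum>k\<in>UNIV. ((M *v c k) $ i)^2)"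
    by (simp only: norm_sq_vec comp)
  also have "\<dots> = (\<Sum>k\<in>UNIV. \<Sum>i\<in>UNIV. ((M *v c k) $ i)^2)"
    by (rule sum.swap)
  also have "\<dots> = (\<Sum>k\<in>UNIV. (norm (M *v c k))^2)"
    by (simp add: norm_sq_vec)
  also have "\<dots> \<le> (\<Sum>k\<in>UNIV. (L * norm (c k))^2)"
  proof (rule sum_mono)
    fix k
    have "norm (M *v c k) \<le> L * norm (c k)" unfolding L_def
      by (rule onorm) simp
    then show "(norm (M *v c k))^2 \<le> (L * norm (c k))^2"
      by (simp add: power_mono)
  qed
  also have "\<dots> = L^2 * (\<Sum>k\<in>UNIV. \<Sum>i\<in>UNIV. (u i $ k)^2)"
  proof -
    have "(L * norm (c k))^2 = L^2 * (\<Sum>i\<in>UNIV. (u i $ k)^2)" for k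
      by (simp only: power_mult_distrib norm_sq_vec c_def vec_lambda_beta)
    then show ?thesis by (simp only: sum_distrib_left)
  qed
  also have "\<dots> = L^2 * (\<Sum>i\<in>UNIV. (norm (u i))^2)"
    by (subst sum.swap) (simp only: norm_sq_vec)
  finally show ?thesis unfolding L_def .
qed

lemma mop_L2:
  fixes M :: "real^'n^'n" and u :: "'n \<Rightarrow> real^'d"
  shows "L2_set (\<lambda>i. norm (\<Sum>r\<in>UNIV. M$i$r *\<^sub>R u r)) UNIV
     \<le> onorm (\<lambda>z. M *v z) * L2_set (\<lambda>i. norm (u i)) UNIV"
proof -
  have L0: "0 \<le> onorm (\<lambda>z. M *v z)" by (rule onorm_pos_le) simp
  have "L2_set (\<lambda>i. norm (\<Sum>r\<in>UNIV. M$i$r *\<^sub>R u r)) UNIV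
     \<le> sqrt ((onorm (\<lambda>z. M *v z))^2 * (\<Sum>i\<in>UNIV. (norm (u i))^2))"
    unfolding L2_set_def by (rule real_sqrt_le_mono[OF mop_sq])
  also have "\<dots> = onorm (\<lambda>z. M *v z) * L2_set (\<lambda>i. norm (u i)) UNIV"
    using L0 by (simp add: L2_set_def real_sqrt_mult)
  finally show ?thesis .
qed

lemma sum_le_L2:
  fixes f :: "'n::finite \<Rightarrow> real"
  shows "(\<Sum>i\<in>UNIV. f i) \<le> sqrt (real CARD('n)) * L2_set f UNIV"
proof -
  have "(\<Sum>i\<in>UNIV. f i)^2 \<le> (\<Sum>i\<in>UNIV. (f i)^2) * real CARD('n)"
    by (rule sum_squared_le_sum_of_squares)
  then have "sqrt ((\<Sum>i\<in>UNIV. f i)^2) \<le> sqrt ((\<Sum>i\<in>UNIV. (f i)^2) * real CARD('n))"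
    by (rule real_sqrt_le_mono)
  then show ?thesis by (simp add: L2_set_def real_sqrt_mult mult.commute)
qed

lemma norm_normalize_le: "norm (normalize y) \<le> 1"
  by (simp add: normalize_def)

theorem lemma4:
  fixes W :: "real^'n^'n"
    and g :: "'n \<Rightarrow> real^'d \<Rightarrow> 'xi \<Rightarrow> real^'d"
    and \<xi> :: "nat \<Rightarrow> 'n \<Rightarrow> 'xi"
    and x v y :: "nat \<Rightarrow> 'n \<Rightarrow> real^'d"
    and x0 :: "real^'d"
    and \<alpha> \<beta> :: real and T :: nat
  assumes nonneg: "nonneg_matrix W"
    and prim: "primitive_matrix W"
    and ds: "doubly_stochastic W"
    and lam: "mixing_rate W < 1"
    and alpha: "\<alpha> > 0"
    and beta: "0 \<le> \<beta>" "\<beta> < 1"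
    and x_init: "\<And>i. x 0 i = x0"
    and v_init: "\<And>i. v 0 i = (1 - \<beta>) *\<^sub>R g i (x 0 i) (\<xi> 0 i)"
    and v_step: "\<And>t i. Suc t < T \<Longrightarrow>
        v (Suc t) i = \<beta> *\<^sub>R v t i + (1 - \<beta>) *\<^sub>R g i (x (Suc t) i) (\<xi> (Suc t) i)"
    and y_init: "\<And>i. y 0 i = (\<Sum>r\<in>UNIV. W $ i $ r *\<^sub>R v 0 r)"
    and y_step: "\<And>t i. Suc t < T \<Longrightarrow>
        y (Suc t) i = (\<Sum>r\<in>UNIV. W $ i $ r *\<^sub>R (y t r + v (Suc t) r - v t r))"
    and x_step: "\<And>t i. t < T \<Longrightarrow>
        x (Suc t) i = (\<Sum>r\<in>UNIV. W $ i $ r *\<^sub>R (x t r - \<alpha> *\<^sub>R normalize (y t r)))"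
  shows "\<forall>t \<le> T.
     (1 / real CARD('n)) * (\<Sum>i\<in>UNIV. norm (x t i - (1 / real CARD('n)) *\<^sub>R (\<Sum>j\<in>UNIV. x t j)))
       \<le> \<alpha> * mixing_rate W / (1 - mixing_rate W)"
proof -
  define n where "n = real CARD('n)"
  have n0: "n > 0" unfolding n_def by simp
  define M :: "real^'n^'n" where "M = W - avg_matrix"
  define lam where "lam = mixing_rate W"
  have lam_def': "lam = onorm (\<lambda>z. M *v z)" unfolding lam_def mixing_rate_def M_def ..
  have lam0: "0 \<le> lam" unfolding lam_def' by (rule onorm_pos_le) simp
  have lam1: "lam < 1" using lam lam_def by simp
  have Mij: "M $ i $ r = W $ i $ r - 1 / n" for i r
    by (simp add: M_def avg_matrix_def n_def)
  have rows: "(\<Sum>r\<in>UNIV. W $ i $ r) = 1" for i using ds by (simp add: doubly_stochastic_def)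
  have cols: "(\<Sum>j\<in>UNIV. W $ j $ r) = 1" for r using ds by (simp add: doubly_stochastic_def)
  have Mrow: "(\<Sum>r\<in>UNIV. M $ i $ r) = 0" for i
    using n0 by (simp add: Mij sum_subtractf rows n_def)
  define e where "e t i = x t i - (1 / n) *\<^sub>R (\<Sum>j\<in>UNIV. x t j)" for t i
  define N where "N t r = normalize (y t r)" for t r
  define F where "F u = L2_set (\<lambda>i. norm (u i)) (UNIV :: 'n set)" for u :: "'n \<Rightarrow> real^'d"
  define B where "B = \<alpha> * lam * sqrt n / (1 - lam)"
  have B0: "0 \<le> B" unfolding B_def using alpha lam0 lam1 n0 by simp
  have Mlin: "(\<Sum>r\<in>UNIV. M $ i $ r *\<^sub>R x t r) = (\<Sum>r\<in>UNIV. M $ i $ r *\<^sub>R e t r)" for i t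
  proof -
    have "(\<Sum>r\<in>UNIV. M $ i $ r *\<^sub>R e t r)
       = (\<Sum>r\<in>UNIV. M $ i $ r *\<^sub>R x t r) - (\<Sum>r\<in>UNIV. M $ i $ r) *\<^sub>R ((1 / n) *\<^sub>R (\<Sum>j\<in>UNIV. x t j))"
      by (simp add: e_def scaleR_right_diff_distrib sum_subtractf scaleR_sum_left[symmetric] del: scaleR_scaleR)
    then show ?thesis by (simp add: Mrow)
  qed
  have step: "e (Suc t) i = (\<Sum>r\<in>UNIV. M $ i $ r *\<^sub>R e t r) - \<alpha> *\<^sub>R (\<Sum>r\<in>UNIV. M $ i $ r *\<^sub>R N t r)"
    if tT: "t < T" for t i
  proof -
    define z where "z r = x t r - \<alpha> *\<^sub>R N t r" for r
    have xs: "x (Suc t) j = (\<Sum>r\<in>UNIV. W $ j $ r *\<^sub>R z r)" for j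
      using x_step[OF tT] by (simp add: z_def N_def)
    have "(\<Sum>j\<in>UNIV. x (Suc t) j) = (\<Sum>r\<in>UNIV. \<Sum>j\<in>UNIV. W $ j $ r *\<^sub>R z r)"
      unfolding xs by (rule sum.swap)
    also have "\<dots> = (\<Sum>r\<in>UNIV. z r)"
      by (simp add: scaleR_sum_left[symmetric] cols)
    finally have sx: "(\<Sum>j\<in>UNIV. x (Suc t) j) = (\<Sum>r\<in>UNIV. z r)" .
    have "e (Suc t) i = (\<Sum>r\<in>UNIV. W $ i $ r *\<^sub>R z r) - (\<Sum>r\<in>UNIV. (1/n) *\<^sub>R z r)"
      by (simp only: e_def sx xs[of i] scaleR_sum_right)
    also have "\<dots> = (\<Sum>r\<in>UNIV. M $ i $ r *\<^sub>R z r)"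
      by (simp add: Mij scaleR_left_diff_distrib sum_subtractf)
    also have "\<dots> = (\<Sum>r\<in>UNIV. M $ i $ r *\<^sub>R x t r) - \<alpha> *\<^sub>R (\<Sum>r\<in>UNIV. M $ i $ r *\<^sub>R N t r)"
      by (simp add: z_def scaleR_right_diff_distrib sum_subtractf scaleR_sum_right mult.commute)
    finally show ?thesis by (simp add: Mlin)
  qed
  have FN: "F (N t) \<le> sqrt n" for t
  proof -
    have "F (N t) \<le> L2_set (\<lambda>i. 1) (UNIV :: 'n set)"
      unfolding F_def by (rule L2_set_mono) (auto simp: N_def norm_normalize_le)
    then show ?thesis by (simp add: L2_set_constant n_def)
  qed
  have tri: "norm (a - \<alpha> *\<^sub>R b) \<le> norm a + \<alpha> * norm b" for a b :: "real^'d"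
  proof -
    have "norm (a - \<alpha> *\<^sub>R b) \<le> norm a + norm (\<alpha> *\<^sub>R b)" by (rule norm_triangle_ineq4)
    then show ?thesis using alpha by simp
  qed
  have Fstep: "F (e (Suc t)) \<le> lam * F (e t) + \<alpha> * lam * sqrt n" if tT: "t < T" for t
  proof -
    have "F (e (Suc t)) \<le> L2_set (\<lambda>i. norm (\<Sum>r\<in>UNIV. M $ i $ r *\<^sub>R e t r)
          + \<alpha> * norm (\<Sum>r\<in>UNIV. M $ i $ r *\<^sub>R N t r)) UNIV"
      unfolding F_def step[OF tT]
      by (rule L2_set_mono) (simp_all only: tri norm_ge_zero)
    also have "\<dots> \<le> L2_set (\<lambda>i. norm (\<Sum>r\<in>UNIV. M $ i $ r *\<^sub>R e t r)) UNIV
          + L2_set (\<lambda>i. \<alpha> * norm (\<Sum>r\<in>UNIV. M $ i $ r *\<^sub>R N t r)) UNIV"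
      by (rule L2_set_triangle_ineq)
    also have "\<dots> = L2_set (\<lambda>i. norm (\<Sum>r\<in>UNIV. M $ i $ r *\<^sub>R e t r)) UNIV
          + \<alpha> * L2_set (\<lambda>i. norm (\<Sum>r\<in>UNIV. M $ i $ r *\<^sub>R N t r)) UNIV"
      using alpha by (simp add: L2_set_right_distrib)
    also have "\<dots> \<le> lam * F (e t) + \<alpha> * (lam * F (N t))"
      unfolding F_def lam_def'
      using alpha by (intro add_mono mult_left_mono mop_L2) simp_all
    also have "\<dots> \<le> lam * F (e t) + \<alpha> * (lam * sqrt n)"
      using alpha lam0 FN by (intro add_mono mult_left_mono) auto
    finally show ?thesis by simp
  qed
  have bound: "t \<le> T \<Longrightarrow> F (e t) \<le> B" for t
  proof (induction t)
    case 0
    have "F (e 0) = 0" unfolding F_def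
      by (rule L2_set_0') (simp add: e_def x_init n_def sum_constant_scaleR del: sum_constant)
    then show ?case using B0 by simp
  next
    case (Suc t)
    then have "F (e (Suc t)) \<le> lam * F (e t) + \<alpha> * lam * sqrt n" using Fstep by simp
    also have "\<dots> \<le> lam * B + \<alpha> * lam * sqrt n"
      using Suc lam0 by (simp add: mult_left_mono)
    also have "\<dots> = B"
    proof -
      have "B * (1 - lam) = \<alpha> * lam * sqrt n" unfolding B_def using lam1 by simp
      then show ?thesis by (simp add: algebra_simps)
    qed
    finally show ?case .
  qed
  show ?thesis
  proof (intro allI impI)
    fix t assume tT: "t \<le> T"
    have "(\<Sum>i\<in>UNIV. norm (e t i)) \<le> sqrt n * F (e t)"
      unfolding F_def n_def by (rule sum_le_L2)
    also have "\<dots> \<le> sqrt n * B" using bound[OF tT] n0 by (auto intro!: mult_left_mono[of _ _ "sqrt n"])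
    finally have "(1 / n) * (\<Sum>i\<in>UNIV. norm (e t i)) \<le> (1 / n) * (sqrt n * B)"
      by (rule mult_left_mono) (use n0 in simp)
    also have "\<dots> = (sqrt n * sqrt n) / n * (\<alpha> * lam / (1 - lam))" unfolding B_def by simp
    also have "\<dots> = \<alpha> * lam / (1 - lam)" using n0 by simp
    finally show "(1 / real CARD('n)) * (\<Sum>i\<in>UNIV. norm (x t i - (1 / real CARD('n)) *\<^sub>R (\<Sum>j\<in>UNIV. x t j)))
       \<le> \<alpha> * mixing_rate W / (1 - mixing_rate W)"
      unfolding e_def n_def lam_def .
  qed
qed

end
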